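(* Let $1\le p<2$, $N\in\mathbb N$, $d,n\ge1$, let $f=(f_1,\dots,f_d)$ be vector fields on $\mathbb R^n$ of class $C^1_b$, let $\mathbf w=(\mathbf w_0,\dots,\mathbf w_N)$ be a time series in $\mathbb R^d$, and let $\mathbf x$ solve $\mathbf x_{k+1}=\mathbf x_k+\sum_{\mu=1}^df_\mu(\mathbf x_k)(\mathbf w^\mu_{k+1}-\mathbf w^\mu_k)$, $\mathbf x_0=\xi\in\mathbb R^n$. Then for all $0\le k<l\le N$, \[ \|\mathbf x\|_{p;[k,l]}\le 2\Big(2^pC_{p,N}^{p-1}\|f\|^p_{C^1_b}\|\mathbf w\|^p_{p;[k,l]}\ \vee\ 2\|f\|_{C^1_b}\|\mathbf w\|_{p;[k,l]}\Big), \] where $C_{p,N}\coloneqq 2^{2/p}\zeta_N(2/p)$ and $\zeta_N(s)=\sum_{j=1}^Nj^{-s}$.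
   Context: $\mathbb R^n$ carries a fixed norm, $\mathbb R^d$ the $\ell^1$ norm; derivatives use operator norms. $\|f\|_{C^1_b}\coloneqq\max_\mu\max(\|f_\mu\|_\infty,\|Df_\mu\|_\infty)$. For $0\le k<l\le N$, $\mathcal S_{k,l}$ is the set of increasing integer sequences $s=(s_0=k<s_1<\dots<s_m<s_{m+1}=l)$, $\#s=m$, and $\|\mathbf w\|_{p;[k,l]}\coloneqq(\max_{s\in\mathcal S_{k,l}}\sum_{j=0}^{\#s}|\mathbf w_{s_{j+1}}-\mathbf w_{s_j}|^p)^{1/p}$; $a\vee b=\max(a,b)$. *)

theory Defs
  imports "HOL-Analysis.Analysis"
begin

fun consec_sum :: "(nat \<Rightarrow> nat \<Rightarrow> real) \<Rightarrow> nat list \<Rightarrow> real" where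
  "consec_sum g (a # b # rest) = g a b + consec_sum g (b # rest)"
| "consec_sum g _ = 0"

text \<open>The set S_{k,l}: a partition is given by its set of interior points P \<subseteq> {k<..<l};
  the full sequence is k < s_1 < ... < s_m < l.\<close>
definition partition_points :: "nat \<Rightarrow> nat \<Rightarrow> nat set \<Rightarrow> nat list" where
  "partition_points k l P = sorted_list_of_set (insert k (insert l P))"

text \<open>p-variation of a discrete path w.r.t. the distance function dst (dst a b = |w_b - w_a|).\<close>
definition pvar :: "real \<Rightarrow> (nat \<Rightarrow> nat \<Rightarrow> real) \<Rightarrow> nat \<Rightarrow> nat \<Rightarrow> real" where
  "pvar p dst k l =
     (Max ((\<lambda>P. consec_sum (\<lambda>a b. dst a b powr p) (partition_points k l P)) ` Pow {k<..<l}))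
       powr (1 / p)"

text \<open>l^1 distance on R^d, vectors represented as nat \<Rightarrow> real with coordinates 1..d.\<close>
definition l1_dist :: "nat \<Rightarrow> (nat \<Rightarrow> real) \<Rightarrow> (nat \<Rightarrow> real) \<Rightarrow> real" where
  "l1_dist d u v = (\<Sum>\<mu>=1..d. \<bar>v \<mu> - u \<mu>\<bar>)"

definition C1b_fields :: "nat \<Rightarrow> (nat \<Rightarrow> 'a::real_normed_vector \<Rightarrow> 'a) \<Rightarrow> bool" where
  "C1b_fields d f \<longleftrightarrow> (\<forall>\<mu>\<in>{1..d}. \<exists>D :: 'a \<Rightarrow> 'a \<Rightarrow>\<^sub>L 'a.
      (\<forall>x. (f \<mu> has_derivative blinfun_apply (D x)) (at x)) \<and> continuous_on UNIV D \<and>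
      bounded (range (f \<mu>)) \<and> bounded (range D))"

definition C1b_norm :: "nat \<Rightarrow> (nat \<Rightarrow> 'a::real_normed_vector \<Rightarrow> 'a) \<Rightarrow> real" where
  "C1b_norm d f = Max ((\<lambda>\<mu>. max (SUP x. norm (f \<mu> x))
                                  (SUP x. onorm (frechet_derivative (f \<mu>) (at x)))) ` {1..d})"

definition zetaN :: "nat \<Rightarrow> real \<Rightarrow> real" where
  "zetaN N s = (\<Sum>j=1..N. real j powr (- s))"

definition CpN :: "real \<Rightarrow> nat \<Rightarrow> real" where
  "CpN p N = 2 powr (2 / p) * zetaN N (2 / p)"

end

theory Submission
  imports Defs
begin


definition isPart :: "(nat \<Rightarrow> nat) \<Rightarrow> nat \<Rightarrow> nat \<Rightarrow> nat \<Rightarrow> bool" where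
  "isPart \<sigma> m s t \<longleftrightarrow> \<sigma> 0 = s \<and> \<sigma> m = t \<and> (\<forall>j<m. \<sigma> j < \<sigma> (Suc j))"

definition Vm :: "(nat \<Rightarrow> nat \<Rightarrow> real) \<Rightarrow> nat \<Rightarrow> nat \<Rightarrow> real" where
  "Vm g s t = Max ((\<lambda>P. consec_sum g (partition_points s t P)) ` Pow {s<..<t})"

definition psum :: "(nat \<Rightarrow> nat \<Rightarrow> real) \<Rightarrow> (nat \<Rightarrow> nat) \<Rightarrow> nat \<Rightarrow> real" where
  "psum g \<sigma> m = (\<Sum>j<m. g (\<sigma> j) (\<sigma> (Suc j)))"

lemma pvar_Vm: "pvar p dst s t = Vm (\<lambda>a b. dst a b powr p) s t powr (1/p)"
  unfolding pvar_def Vm_def by simp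

lemma consec_sum_nth: "consec_sum g L = (\<Sum>j < length L - 1. g (L!j) (L!Suc j))"
proof (induction g L rule: consec_sum.induct)
  case (1 g a b rest)
  have "(\<Sum>j < length (a#b#rest) - 1. g ((a#b#rest)!j) ((a#b#rest)!Suc j))
      = (\<Sum>j < Suc (length rest). g ((a#b#rest)!j) ((a#b#rest)!Suc j))" by simp
  also have "\<dots> = g a b + (\<Sum>j < length rest. g ((a#b#rest)!Suc j) ((a#b#rest)!Suc (Suc j)))"
    by (subst sum.lessThan_Suc_shift) simp
  also have "\<dots> = g a b + (\<Sum>j < length (b#rest) - 1. g ((b#rest)!j) ((b#rest)!Suc j))"
    by simp
  finally show ?case using 1 by simp
qed auto

lemma part_less: "isPart \<sigma> m s t \<Longrightarrow> i < j \<Longrightarrow> j \<le> m \<Longrightarrow> \<sigma> i < \<sigma> j"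
proof (induction j)
  case (Suc j)
  have st: "\<sigma> j < \<sigma> (Suc j)" using Suc.prems unfolding isPart_def by simp
  show ?case
  proof (cases "i = j")
    case True then show ?thesis using st by simp
  next
    case False
    then have "\<sigma> i < \<sigma> j" using Suc by simp
    then show ?thesis using st by simp
  qed
qed simp

lemma part_le: "isPart \<sigma> m s t \<Longrightarrow> i \<le> j \<Longrightarrow> j \<le> m \<Longrightarrow> \<sigma> i \<le> \<sigma> j"
  using part_less[of \<sigma> m s t i j] by (cases "i = j") auto

lemma part_range: "isPart \<sigma> m s t \<Longrightarrow> j \<le> m \<Longrightarrow> s \<le> \<sigma> j \<and> \<sigma> j \<le> t"
proof -
  assume a: "isPart \<sigma> m s t" "j \<le> m"
  have "\<sigma> 0 \<le> \<sigma> j" "\<sigma> j \<le> \<sigma> m" using part_le[OF a(1), of 0 j] part_le[OF a(1), of j m] a(2) by auto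
  then show ?thesis using a(1) unfolding isPart_def by simp
qed

lemma part_sorted: assumes "isPart \<sigma> m s t"
  shows "sorted_list_of_set (\<sigma> ` {0..m}) = map \<sigma> [0..<Suc m]"
proof -
  have sw: "sorted_wrt (<) (map \<sigma> [0..<Suc m])"
    unfolding sorted_wrt_iff_nth_less
  proof (intro allI impI)
    fix i j assume "i < j" "j < length (map \<sigma> [0..<Suc m])"
    then show "map \<sigma> [0..<Suc m] ! i < map \<sigma> [0..<Suc m] ! j"
      using part_less[OF assms, of i j] by (simp only: length_map length_upt nth_map nth_upt) simp
  qed
  have st: "set (map \<sigma> [0..<Suc m]) = \<sigma> ` {0..m}"
    by (simp only: set_map set_upt atLeastLessThanSuc_atLeastAtMost)
  have "inj_on \<sigma> {0..m}"
  proof (rule inj_onI)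
    fix i j assume ij: "i \<in> {0..m}" "j \<in> {0..m}" "\<sigma> i = \<sigma> j"
    show "i = j"
    proof (rule ccontr)
      assume "i \<noteq> j"
      then consider "i < j" | "j < i" by linarith
      then show False
        using part_less[OF assms, of i j] part_less[OF assms, of j i] ij by cases auto
    qed
  qed
  then have len: "length (map \<sigma> [0..<Suc m]) = card (\<sigma> ` {0..m})"
    by (simp add: card_image)
  have fin: "finite (\<sigma> ` {0..m})" by simp
  have "sorted_wrt (<) (map \<sigma> [0..<Suc m]) \<and> set (map \<sigma> [0..<Suc m]) = \<sigma> ` {0..m}
     \<and> length (map \<sigma> [0..<Suc m]) = card (\<sigma> ` {0..m})"
    using sw st len by (intro conjI)
  from iffD1[OF sorted_list_of_set_unique[OF fin] this] show ?thesis .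
qed

lemma part_psum_le:
  assumes "isPart \<sigma> m s t"
  shows "psum g \<sigma> m \<le> Vm g s t"
proof -
  let ?P = "\<sigma> ` {0<..<m}"
  have sub: "?P \<in> Pow {s<..<t}"
    using part_less[OF assms] assms unfolding isPart_def by auto
  have ins: "insert s (insert t ?P) = \<sigma> ` {0..m}"
  proof -
    have "{0..m} = insert 0 (insert m {0<..<m})" if "m > 0" using that by auto
    moreover have "m = 0 \<Longrightarrow> s = t" using assms unfolding isPart_def by auto
    ultimately show ?thesis using assms unfolding isPart_def by (cases "m = 0") auto
  qed
  have "consec_sum g (partition_points s t ?P) = psum g \<sigma> m"
    unfolding partition_points_def ins part_sorted[OF assms] consec_sum_nth psum_def
    by (intro sum.cong) (auto simp: nth_append simp del: upt_Suc)
  then have mem: "psum g \<sigma> m \<in> (\<lambda>P. consec_sum g (partition_points s t P)) ` Pow {s<..<t}"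
    by (rule image_eqI[OF sym sub])
  have fin: "finite ((\<lambda>P. consec_sum g (partition_points s t P)) ` Pow {s<..<t})"
    by (intro finite_imageI) simp
  show ?thesis unfolding Vm_def
    by (rule Max_ge[OF fin mem])
qed

lemma Vm_attained:
  assumes "s \<le> t"
  shows "\<exists>\<sigma> m. isPart \<sigma> m s t \<and> Vm g s t = psum g \<sigma> m"
proof -
  let ?F = "(\<lambda>P. consec_sum g (partition_points s t P))"
  have fin: "finite (?F ` Pow {s<..<t})" by (intro finite_imageI) simp
  have ne: "?F ` Pow {s<..<t} \<noteq> {}" using Pow_bottom by blast
  from Max_in[OF fin ne] obtain P where P: "P \<in> Pow {s<..<t}" "Vm g s t = ?F P"
    unfolding Vm_def by blast
  define A where "A = insert s (insert t P)"
  define L where "L = partition_points s t P"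
  have finA: "finite A" unfolding A_def using P(1) finite_subset[of P "{s<..<t}"] by auto
  have L: "L = sorted_list_of_set A" unfolding L_def A_def partition_points_def by simp
  have sw: "sorted_wrt (<) L" unfolding L by simp
  have setL: "set L = A" unfolding L using finA by simp
  have Asub: "A \<subseteq> {s..t}" unfolding A_def using P(1) assms by auto
  have lenpos: "length L \<ge> 1" using setL unfolding A_def by (cases L) auto
  define m where "m = length L - 1"
  define \<sigma> where "\<sigma> = (\<lambda>j. L ! j)"
  have lt: "\<sigma> i < \<sigma> j" if "i < j" "j \<le> m" for i j
    using sw that lenpos unfolding sorted_wrt_iff_nth_less \<sigma>_def m_def by auto
  have s0: "\<sigma> 0 = s"
  proof -
    have "s \<in> set L" unfolding setL A_def by simp
    then obtain i where i: "i < length L" "L ! i = s" by (auto simp: in_set_conv_nth)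
    have "0 < length L" using lenpos by linarith
    then have "L ! 0 \<in> set L" by (rule nth_mem)
    then have "L ! 0 \<in> A" using setL by simp
    then have "s \<le> L ! 0" using Asub by auto
    show ?thesis
    proof (rule ccontr)
      assume "\<sigma> 0 \<noteq> s"
      have "i \<noteq> 0"
      proof
        assume "i = 0" then show False using i \<open>\<sigma> 0 \<noteq> s\<close> unfolding \<sigma>_def by simp
      qed
      then have "0 < i" by simp
      then have "L ! 0 < L ! i" using sw i unfolding sorted_wrt_iff_nth_less by blast
      then show False using i \<open>s \<le> L ! 0\<close> by simp
    qed
  qed
  have sm: "\<sigma> m = t"
  proof -
    have "t \<in> set L" unfolding setL A_def by simp
    then obtain i where i: "i < length L" "L ! i = t" by (auto simp: in_set_conv_nth)
    have "L ! m \<in> A" using lenpos setL nth_mem[of m L] unfolding m_def by simp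
    then have "L ! m \<le> t" using Asub by auto
    show ?thesis
    proof (rule ccontr)
      assume "\<sigma> m \<noteq> t"
      then have "i \<noteq> m" using i unfolding \<sigma>_def by auto
      then have "i < m" using i unfolding m_def by simp
      then have "L ! i < L ! m" using sw i lenpos unfolding sorted_wrt_iff_nth_less m_def by auto
      then show False using i \<open>L ! m \<le> t\<close> by simp
    qed
  qed
  have part: "isPart \<sigma> m s t" unfolding isPart_def using s0 sm lt by simp
  have "?F P = psum g \<sigma> m" unfolding L_def[symmetric] consec_sum_nth psum_def \<sigma>_def m_def by simp
  then show ?thesis using part P(2) by auto
qed

lemma part_zero: "isPart \<sigma> m s s \<Longrightarrow> m = 0"
  using part_less[of \<sigma> m s s 0 m] unfolding isPart_def by (cases "m = 0") auto

lemma Vm_refl: "Vm g s s = 0"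
proof -
  obtain \<sigma> m where "isPart \<sigma> m s s" "Vm g s s = psum g \<sigma> m" using Vm_attained[of s s g] by auto
  then show ?thesis using part_zero[of \<sigma> m s] by (simp add: psum_def)
qed

lemma psum_nonneg: "(\<And>a b. g a b \<ge> 0) \<Longrightarrow> psum g \<sigma> m \<ge> 0"
  unfolding psum_def by (intro sum_nonneg) auto

lemma Vm_nonneg: "(\<And>a b. g a b \<ge> 0) \<Longrightarrow> s \<le> t \<Longrightarrow> Vm g s t \<ge> 0"
  using Vm_attained[of s t g] psum_nonneg by metis

lemma Vm_ge_single: assumes "s < t" shows "g s t \<le> Vm g s t"
proof -
  have "isPart (\<lambda>j. if j = 0 then s else t) 1 s t" unfolding isPart_def using assms by simp
  from part_psum_le[OF this, of g] show ?thesis by (simp add: psum_def)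
qed

lemma Vm_single: "Vm g s (Suc s) = g s (Suc s)"
proof -
  obtain \<sigma> m where p: "isPart \<sigma> m s (Suc s)" "Vm g s (Suc s) = psum g \<sigma> m"
    using Vm_attained[of s "Suc s" g] by auto
  have "m \<noteq> 0"
  proof
    assume "m = 0" with p(1) show False unfolding isPart_def by auto
  qed
  moreover have "\<not> m \<ge> 2"
  proof
    assume "m \<ge> 2"
    then have "\<sigma> 0 < \<sigma> 1" "\<sigma> 1 < \<sigma> m" using part_less[OF p(1), of 0 1] part_less[OF p(1), of 1 m] by auto
    then show False using p(1) unfolding isPart_def by simp
  qed
  ultimately have "m = 1" by simp
  then show ?thesis using p unfolding isPart_def psum_def by simp
qed

lemma psum_concat:
  assumes "\<sigma>1 m1 = \<sigma>2 0"
  shows "psum g (\<lambda>j. if j \<le> m1 then \<sigma>1 j else \<sigma>2 (j - m1)) (m1 + k) = psum g \<sigma>1 m1 + psum g \<sigma>2 k"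
proof (induction k)
  case 0
  show ?case unfolding psum_def by (auto intro!: sum.cong)
next
  case (Suc k)
  have "psum g (\<lambda>j. if j \<le> m1 then \<sigma>1 j else \<sigma>2 (j - m1)) (m1 + Suc k)
     = psum g (\<lambda>j. if j \<le> m1 then \<sigma>1 j else \<sigma>2 (j - m1)) (m1 + k)
       + g (if m1 + k \<le> m1 then \<sigma>1 (m1+k) else \<sigma>2 (m1 + k - m1)) (\<sigma>2 (Suc k))"
    unfolding psum_def by simp
  also have "(if m1 + k \<le> m1 then \<sigma>1 (m1+k) else \<sigma>2 (m1 + k - m1)) = \<sigma>2 k"
    using assms by (cases k) auto
  finally show ?case using Suc unfolding psum_def by simp
qed

lemma Vm_superadd:
  assumes "s \<le> u" "u \<le> t"
  shows "Vm g s u + Vm g u t \<le> Vm g s t"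
proof -
  obtain \<sigma>1 m1 where p1: "isPart \<sigma>1 m1 s u" "Vm g s u = psum g \<sigma>1 m1"
    using Vm_attained[OF assms(1)] by blast
  obtain \<sigma>2 m2 where p2: "isPart \<sigma>2 m2 u t" "Vm g u t = psum g \<sigma>2 m2"
    using Vm_attained[OF assms(2)] by blast
  define \<tau> where "\<tau> = (\<lambda>j. if j \<le> m1 then \<sigma>1 j else \<sigma>2 (j - m1))"
  have eq: "\<sigma>1 m1 = \<sigma>2 0" using p1 p2 unfolding isPart_def by simp
  have "isPart \<tau> (m1 + m2) s t"
    unfolding isPart_def
  proof (intro conjI allI impI)
    show "\<tau> 0 = s" using p1 unfolding \<tau>_def isPart_def by simp
    show "\<tau> (m1 + m2) = t" using p1 p2 eq unfolding \<tau>_def isPart_def by (cases m2) auto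
    fix j assume j: "j < m1 + m2"
    show "\<tau> j < \<tau> (Suc j)"
    proof (cases "j < m1")
      case True then show ?thesis using p1 unfolding \<tau>_def isPart_def by simp
    next
      case False
      then have "\<tau> j = \<sigma>2 (j - m1)" "\<tau> (Suc j) = \<sigma>2 (Suc (j - m1))"
        using eq unfolding \<tau>_def by (auto simp: Suc_diff_le)
      moreover have "j - m1 < m2" using j False by simp
      ultimately show ?thesis using p2 unfolding isPart_def by simp
    qed
  qed
  from part_psum_le[OF this, of g] show ?thesis
    using psum_concat[of \<sigma>1 m1 \<sigma>2 g m2, OF eq] p1 p2 unfolding \<tau>_def by simp
qed

lemma Vm_mono:
  assumes "\<And>a b. g a b \<ge> 0" "s \<le> a" "a \<le> b" "b \<le> t"
  shows "Vm g a b \<le> Vm g s t"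
proof -
  have "Vm g s a + Vm g a b \<le> Vm g s b" using Vm_superadd assms by blast
  moreover have "Vm g s b + Vm g b t \<le> Vm g s t" using Vm_superadd assms by (meson order_trans)
  moreover have "Vm g s a \<ge> 0" "Vm g b t \<ge> 0" using Vm_nonneg assms by auto
  ultimately show ?thesis by linarith
qed

lemma Vm_superadd_multi:
  assumes "isPart \<sigma> m s t"
  shows "(\<Sum>j<m. Vm g (\<sigma> j) (\<sigma> (Suc j))) \<le> Vm g s t"
  using assms
proof (induction m arbitrary: t)
  case 0
  then have "s = t" unfolding isPart_def by simp
  then show ?case using Vm_refl[of g s] by simp
next
  case (Suc m)
  have pm: "isPart \<sigma> m s (\<sigma> m)" using Suc.prems unfolding isPart_def by simp
  have "(\<Sum>j<Suc m. Vm g (\<sigma> j) (\<sigma> (Suc j))) = (\<Sum>j<m. Vm g (\<sigma> j) (\<sigma> (Suc j))) + Vm g (\<sigma> m) t"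
    using Suc.prems unfolding isPart_def by simp
  also have "\<dots> \<le> Vm g s (\<sigma> m) + Vm g (\<sigma> m) t" using Suc.IH[OF pm] by simp
  also have "\<dots> \<le> Vm g s t"
    using Vm_superadd part_range[OF Suc.prems, of m] by simp
  finally show ?case .
qed

lemma cvx:
  fixes u v l p :: real
  assumes "u \<ge> 0" "v \<ge> 0" "0 \<le> l" "l \<le> 1" "p \<ge> 1"
  shows "(l * u + (1 - l) * v) powr p \<le> l * u powr p + (1 - l) * v powr p"
proof -
  have key: "x powr p \<le> x" if "0 \<le> x" "x \<le> 1" for x :: real
  proof (cases "x = 0")
    case True then show ?thesis by simp
  next
    case False then show ?thesis using powr_le_one_le[of x p] that assms by simp
  qed
  consider "u = 0" | "v = 0" | "u > 0" "v > 0" using assms by linarith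
  then show ?thesis
  proof cases
    case 1
    have "((1 - l) * v) powr p = (1 - l) powr p * v powr p" using assms by (simp add: powr_mult)
    also have "\<dots> \<le> (1 - l) * v powr p" using key[of "1 - l"] assms by (intro mult_right_mono) auto
    finally show ?thesis using 1 by simp
  next
    case 2
    have "(l * u) powr p = l powr p * u powr p" using assms by (simp add: powr_mult)
    also have "\<dots> \<le> l * u powr p" using key[of l] assms by (intro mult_right_mono) auto
    finally show ?thesis using 2 by simp
  next
    case 3
    have "convex_on {0<..} (\<lambda>x. x powr p)" by (rule powr_convex[OF assms(5)])
    from convex_onD[OF this, of "1 - l" u v] show ?thesis using 3 assms by (simp add: algebra_simps)
  qed
qed

lemma pp_inv: "(0::real) \<le> x \<Longrightarrow> p > 0 \<Longrightarrow> (x powr (1/p)) powr p = x"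
  by (simp add: powr_powr)

lemma pp_inv2: "(0::real) \<le> x \<Longrightarrow> p > 0 \<Longrightarrow> (x powr p) powr (1/p) = x"
  by (simp add: powr_powr)

lemma minkowski3:
  fixes a b al be p :: real
  assumes "a \<ge> 0" "b \<ge> 0" "al \<ge> 0" "be \<ge> 0" "p \<ge> 1"
  shows "a powr p + (al + be) powr p + b powr p
     \<le> ((a powr p + al powr p) powr (1/p) + (be powr p + b powr p) powr (1/p)) powr p"
proof -
  define P where "P = (a powr p + al powr p) powr (1/p)"
  define Q where "Q = (be powr p + b powr p) powr (1/p)"
  have p0: "p > 0" using assms by simp
  have PP: "P powr p = a powr p + al powr p" unfolding P_def by (rule pp_inv) (use p0 in auto)
  have QQ: "Q powr p = be powr p + b powr p" unfolding Q_def by (rule pp_inv) (use p0 in auto)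
  have Pn: "P \<ge> 0" "Q \<ge> 0" unfolding P_def Q_def by auto
  consider "P = 0" | "Q = 0" | "P > 0" "Q > 0" using Pn by linarith
  then show ?thesis
  proof cases
    case 1
    then have "a powr p + al powr p = 0" using PP p0 by simp
    then have "a = 0" "al = 0" using assms by (auto simp: add_nonneg_eq_0_iff)
    then show ?thesis using QQ p0 unfolding P_def[symmetric] Q_def[symmetric] 1 by simp
  next
    case 2
    then have "be powr p + b powr p = 0" using QQ p0 by simp
    then have "be = 0" "b = 0" using assms by (auto simp: add_nonneg_eq_0_iff)
    then show ?thesis using PP p0 unfolding P_def[symmetric] Q_def[symmetric] 2 by simp
  next
    case 3
    define S where "S = P + Q"
    define l where "l = P / S"
    have S0: "S > 0" unfolding S_def using 3 by simp
    have l01: "0 \<le> l" "l \<le> 1" unfolding l_def S_def using 3 by auto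
    have l1: "1 - l = Q / S" unfolding l_def S_def using 3 by (simp add: field_simps)
    have e1: "a / S = l * (a / P) + (1 - l) * 0" unfolding l_def using 3 S0 by simp
    have e2: "(al + be) / S = l * (al / P) + (1 - l) * (be / Q)" unfolding l1 unfolding l_def using 3 S0
      by (simp add: field_simps)
    have e3: "b / S = l * 0 + (1 - l) * (b / Q)" unfolding l1 using 3 S0 by simp
    have c1: "(a / S) powr p \<le> l * (a / P) powr p + (1 - l) * 0 powr p"
      unfolding e1 by (rule cvx) (use assms 3 l01 in auto)
    have c2: "((al + be) / S) powr p \<le> l * (al / P) powr p + (1 - l) * (be / Q) powr p"
      unfolding e2 by (rule cvx) (use assms 3 l01 in auto)
    have c3: "(b / S) powr p \<le> l * 0 powr p + (1 - l) * (b / Q) powr p"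
      unfolding e3 by (rule cvx) (use assms 3 l01 in auto)
    have "(a / S) powr p + ((al + be) / S) powr p + (b / S) powr p
        \<le> l * ((a powr p + al powr p) / P powr p) + (1 - l) * ((be powr p + b powr p) / Q powr p)"
      using c1 c2 c3 p0 by (simp add: powr_divide add_divide_distrib distrib_left)
    also have "\<dots> = 1"
    proof -
      have "P powr p > 0" "Q powr p > 0" using 3 by simp_all
      then show ?thesis unfolding PP[symmetric] QQ[symmetric] by simp
    qed
    finally have le1: "(a / S) powr p + ((al + be) / S) powr p + (b / S) powr p \<le> 1" .
    have "(a powr p + (al + be) powr p + b powr p) / S powr p
        = (a / S) powr p + ((al + be) / S) powr p + (b / S) powr p"
      unfolding powr_divide[of a S p] powr_divide[of "al+be" S p] powr_divide[of b S p]
      by (simp only: add_divide_distrib)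
    with le1 have "(a powr p + (al + be) powr p + b powr p) / S powr p \<le> 1" by simp
    then show ?thesis using S0 unfolding S_def P_def Q_def by simp
  qed
qed

lemma psum_split:
  assumes "j < m"
  shows "psum g \<sigma> m = psum g \<sigma> j + g (\<sigma> j) (\<sigma> (Suc j)) + psum g (\<lambda>i. \<sigma> (i + Suc j)) (m - Suc j)"
  using assms
proof (induction m)
  case 0 then show ?case by simp
next
  case (Suc m)
  show ?case
  proof (cases "j = m")
    case True then show ?thesis unfolding psum_def by simp
  next
    case False
    then have jm: "j < m" using Suc.prems by simp
    then have e: "Suc m - Suc j = Suc (m - Suc j)" by simp
    have "psum g \<sigma> (Suc m) = psum g \<sigma> m + g (\<sigma> m) (\<sigma> (Suc m))" unfolding psum_def by simp
    also have "\<dots> = psum g \<sigma> j + g (\<sigma> j) (\<sigma> (Suc j)) + psum g (\<lambda>i. \<sigma> (i + Suc j)) (m - Suc j)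
        + g (\<sigma> m) (\<sigma> (Suc m))" using Suc.IH[OF jm] by simp
    moreover have "psum g (\<lambda>i. \<sigma> (i + Suc j)) (m - Suc j) + g (\<sigma> m) (\<sigma> (Suc m))
        = psum g (\<lambda>i. \<sigma> (i + Suc j)) (Suc m - Suc j)"
      unfolding e psum_def using jm by simp
    ultimately show ?thesis by simp
  qed
qed

lemma X_tri:
  fixes dst :: "nat \<Rightarrow> nat \<Rightarrow> real" and p :: real
  assumes nn: "\<And>a b. dst a b \<ge> 0" and rf: "\<And>a. dst a a = 0"
    and tri: "\<And>a b c. dst a c \<le> dst a b + dst b c"
    and p: "p \<ge> 1" and su: "s \<le> u" and ut: "u \<le> t"
  shows "Vm (\<lambda>a b. dst a b powr p) s t powr (1/p)
     \<le> Vm (\<lambda>a b. dst a b powr p) s u powr (1/p) + Vm (\<lambda>a b. dst a b powr p) u t powr (1/p)"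
proof (cases "u = t")
  case True
  then show ?thesis using Vm_refl by simp
next
  case False
  then have ut': "u < t" using ut by simp
  define G where "G = (\<lambda>a b. dst a b powr p)"
  have p0: "p > 0" using p by simp
  have Gnn: "\<And>a b. G a b \<ge> 0" unfolding G_def by simp
  have Gaa: "\<And>a. G a a = 0" unfolding G_def using rf by simp
  obtain \<sigma> m where pt: "isPart \<sigma> m s t" and V: "Vm G s t = psum G \<sigma> m"
    using Vm_attained[of s t G] su ut by auto
  have m0: "m > 0"
  proof (rule ccontr)
    assume "\<not> m > 0" then have "m = 0" by simp
    then show False using pt su ut' unfolding isPart_def by simp
  qed
  define J where "J = {i. i \<le> m \<and> \<sigma> i \<le> u}"
  define j where "j = Max J"
  have finJ: "finite J" unfolding J_def by simp
  have J0: "0 \<in> J" unfolding J_def using pt su unfolding isPart_def by simp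
  have jJ: "j \<in> J" unfolding j_def using Max_in[OF finJ] J0 by blast
  then have jm: "j \<le> m" and sju: "\<sigma> j \<le> u" unfolding J_def by auto
  have "j \<noteq> m" using sju pt ut' unfolding isPart_def by auto
  then have jm': "j < m" using jm by simp
  have usj: "u < \<sigma> (Suc j)"
  proof (rule ccontr)
    assume "\<not> u < \<sigma> (Suc j)"
    then have "Suc j \<in> J" unfolding J_def using jm' by simp
    then have "Suc j \<le> j" unfolding j_def using Max_ge[OF finJ] by blast
    then show False by simp
  qed
  define A where "A = psum G \<sigma> j"
  define B where "B = psum G (\<lambda>i. \<sigma> (i + Suc j)) (m - Suc j)"
  have An: "A \<ge> 0" "B \<ge> 0" unfolding A_def B_def using psum_nonneg Gnn by auto
  have hA: "A + G (\<sigma> j) u \<le> Vm G s u"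
  proof (cases "\<sigma> j = u")
    case True
    have "isPart \<sigma> j s u" using pt True jm' unfolding isPart_def by simp
    from part_psum_le[OF this, of G] show ?thesis using True Gaa unfolding A_def by simp
  next
    case False
    then have lt: "\<sigma> j < u" using sju by simp
    define \<tau> where "\<tau> = (\<lambda>i. if i \<le> j then \<sigma> i else u)"
    have "isPart \<tau> (Suc j) s u" unfolding isPart_def
    proof (intro conjI allI impI)
      show "\<tau> 0 = s" using pt unfolding \<tau>_def isPart_def by simp
      show "\<tau> (Suc j) = u" unfolding \<tau>_def by simp
      fix i assume i: "i < Suc j"
      show "\<tau> i < \<tau> (Suc i)"
      proof (cases "i = j")
        case True then show ?thesis unfolding \<tau>_def using lt by simp
      next
        case False then show ?thesis unfolding \<tau>_def using i pt jm' unfolding isPart_def by simp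
      qed
    qed
    from part_psum_le[OF this, of G]
    have "psum G \<tau> (Suc j) \<le> Vm G s u" .
    moreover have "psum G \<tau> (Suc j) = A + G (\<sigma> j) u"
    proof -
      have "psum G \<tau> (Suc j) = psum G \<tau> j + G (\<tau> j) (\<tau> (Suc j))" unfolding psum_def by simp
      moreover have "psum G \<tau> j = A" unfolding A_def psum_def \<tau>_def by (intro sum.cong) auto
      ultimately show ?thesis unfolding \<tau>_def by simp
    qed
    ultimately show ?thesis by simp
  qed
  have hB: "G u (\<sigma> (Suc j)) + B \<le> Vm G u t"
  proof -
    define \<tau> where "\<tau> = (\<lambda>i. if i = 0 then u else \<sigma> (i + j))"
    have "isPart \<tau> (m - j) u t" unfolding isPart_def
    proof (intro conjI allI impI)
      show "\<tau> 0 = u" unfolding \<tau>_def by simp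
      show "\<tau> (m - j) = t" using pt jm' unfolding \<tau>_def isPart_def by simp
      fix i assume i: "i < m - j"
      show "\<tau> i < \<tau> (Suc i)"
      proof (cases "i = 0")
        case True then show ?thesis unfolding \<tau>_def using usj by simp
      next
        case False
        have "i + j < m" using i by simp
        then show ?thesis using False pt unfolding \<tau>_def isPart_def by simp
      qed
    qed
    from part_psum_le[OF this, of G]
    have "psum G \<tau> (m - j) \<le> Vm G u t" .
    moreover have "psum G \<tau> (m - j) = G u (\<sigma> (Suc j)) + B"
    proof -
      have e: "m - j = Suc (m - Suc j)" using jm' by simp
      show ?thesis unfolding e psum_def B_def
        by (subst sum.lessThan_Suc_shift) (simp add: \<tau>_def)
    qed
    ultimately show ?thesis by simp
  qed
  define al where "al = dst (\<sigma> j) u"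
  define be where "be = dst u (\<sigma> (Suc j))"
  have abn: "al \<ge> 0" "be \<ge> 0" unfolding al_def be_def using nn by auto
  have Gmid: "G (\<sigma> j) (\<sigma> (Suc j)) \<le> (al + be) powr p"
    unfolding G_def al_def be_def using tri nn p0 by (intro powr_mono2) auto
  have "Vm G s t = A + G (\<sigma> j) (\<sigma> (Suc j)) + B"
    unfolding V A_def B_def by (rule psum_split[OF jm'])
  also have "\<dots> \<le> (A powr (1/p)) powr p + (al + be) powr p + (B powr (1/p)) powr p"
    using Gmid An p0 by (simp add: pp_inv)
  also have "\<dots> \<le> (((A powr (1/p)) powr p + al powr p) powr (1/p) + (be powr p + (B powr (1/p)) powr p) powr (1/p)) powr p"
    by (rule minkowski3) (use An abn p in auto)
  also have "\<dots> \<le> (Vm G s u powr (1/p) + Vm G u t powr (1/p)) powr p"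
  proof -
    have "((A powr (1/p)) powr p + al powr p) powr (1/p) \<le> Vm G s u powr (1/p)"
      using hA An p0 unfolding al_def G_def by (intro powr_mono2) (auto simp: pp_inv)
    moreover have "(be powr p + (B powr (1/p)) powr p) powr (1/p) \<le> Vm G u t powr (1/p)"
      using hB An p0 unfolding be_def G_def by (intro powr_mono2) (auto simp: pp_inv)
    ultimately show ?thesis using p0 by (intro powr_mono2) auto
  qed
  finally have "Vm G s t \<le> (Vm G s u powr (1/p) + Vm G u t powr (1/p)) powr p" .
  then have "Vm G s t powr (1/p) \<le> ((Vm G s u powr (1/p) + Vm G u t powr (1/p)) powr p) powr (1/p)"
    using Vm_nonneg[OF Gnn] su ut p0 by (intro powr_mono2) auto
  also have "\<dots> = Vm G s u powr (1/p) + Vm G u t powr (1/p)"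
    using p0 by (intro pp_inv2) auto
  finally show ?thesis unfolding G_def .
qed



lemma remove_sum:
  fixes h :: "nat \<Rightarrow> nat \<Rightarrow> 'b::ab_group_add"
  assumes "i < m"
  shows "(\<Sum>j<Suc m. h (\<sigma> j) (\<sigma> (Suc j)))
    = (\<Sum>j<m. h ((\<lambda>j. if j < Suc i then \<sigma> j else \<sigma> (Suc j)) j) ((\<lambda>j. if j < Suc i then \<sigma> j else \<sigma> (Suc j)) (Suc j)))
      + (h (\<sigma> i) (\<sigma> (Suc i)) + h (\<sigma> (Suc i)) (\<sigma> (Suc (Suc i))) - h (\<sigma> i) (\<sigma> (Suc (Suc i))))"
  using assms
proof (induction m)
  case 0 then show ?case by simp
next
  case (Suc m)
  show ?case
  proof (cases "i = m")
    case True
    have "(\<Sum>j<Suc m. h ((\<lambda>j. if j < Suc i then \<sigma> j else \<sigma> (Suc j)) j) ((\<lambda>j. if j < Suc i then \<sigma> j else \<sigma> (Suc j)) (Suc j)))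
       = (\<Sum>j<m. h (\<sigma> j) (\<sigma> (Suc j))) + h (\<sigma> m) (\<sigma> (Suc (Suc m)))"
      using True by (simp add: sum.lessThan_Suc)
    then show ?thesis using True by (simp add: algebra_simps)
  next
    case False
    then have im: "i < m" using Suc.prems by simp
    have "(\<Sum>j<Suc (Suc m). h (\<sigma> j) (\<sigma> (Suc j))) = (\<Sum>j<Suc m. h (\<sigma> j) (\<sigma> (Suc j))) + h (\<sigma> (Suc m)) (\<sigma> (Suc (Suc m)))"
      by simp
    also note Suc.IH[OF im]
    finally show ?thesis using im by (simp add: algebra_simps)
  qed
qed

lemma exists_le_avg:
  fixes h :: "nat \<Rightarrow> real"
  assumes "finite S" "S \<noteq> {}"
  shows "\<exists>i\<in>S. real (card S) * h i \<le> sum h S"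
proof -
  have "Min (h ` S) \<in> h ` S" using assms by simp
  then obtain i where i: "i \<in> S" "h i = Min (h ` S)" by (metis imageE)
  have "\<And>j. j \<in> S \<Longrightarrow> h i \<le> h j" using i assms by simp
  from sum_bounded_below[of S "h i" h, OF this] have "real (card S) * h i \<le> sum h S" by simp
  with i(1) show ?thesis by blast
qed

locale setting =
  fixes p :: real and N d :: nat
    and f :: "nat \<Rightarrow> 'a::real_normed_vector \<Rightarrow> 'a"
    and w :: "nat \<Rightarrow> nat \<Rightarrow> real"
    and x :: "nat \<Rightarrow> 'a"
  assumes p1: "1 \<le> p" and p2: "p < 2" and d1: "d \<ge> 1"
    and C1b: "C1b_fields d f"
    and rec: "\<And>k. k < N \<Longrightarrow> x (Suc k) = x k + (\<Sum>\<mu>=1..d. (w (Suc k) \<mu> - w k \<mu>) *\<^sub>R f \<mu> (x k))"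
begin

definition "F = C1b_norm d f"
definition "Xi a b = (\<Sum>\<mu>=1..d. (w b \<mu> - w a \<mu>) *\<^sub>R f \<mu> (x a))"
definition "gx = (\<lambda>a b. norm (x b - x a) powr p)"
definition "gw = (\<lambda>a b. l1_dist d (w a) (w b) powr p)"
definition "X s t = Vm gx s t powr (1/p)"
definition "W s t = Vm gw s t powr (1/p)"

lemma p0: "p > 0" using p1 by simp

lemma gx_nn: "gx a b \<ge> 0" unfolding gx_def by simp
lemma gw_nn: "gw a b \<ge> 0" unfolding gw_def by simp

lemma l1_nn: "l1_dist d u v \<ge> 0" unfolding l1_dist_def by (intro sum_nonneg) auto

lemma F_bounds:
  assumes mu: "\<mu> \<in> {1..d}"
  shows "norm (f \<mu> y) \<le> F" "norm (f \<mu> a - f \<mu> b) \<le> F * norm (a - b)"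
proof -
  obtain D :: "'a \<Rightarrow> 'a \<Rightarrow>\<^sub>L 'a" where D: "\<And>x. (f \<mu> has_derivative blinfun_apply (D x)) (at x)"
    "bounded (range (f \<mu>))" "bounded (range D)"
    using C1b mu unfolding C1b_fields_def by blast
  define S1 where "S1 = (SUP x. norm (f \<mu> x))"
  define S2 where "S2 = (SUP x. onorm (frechet_derivative (f \<mu>) (at x)))"
  have fd: "frechet_derivative (f \<mu>) (at y) = blinfun_apply (D y)" for y
    using frechet_derivative_at[OF D(1)] by simp
  have "F \<ge> max S1 S2"
    unfolding F_def C1b_norm_def S1_def S2_def using mu by (intro Max_ge) auto
  then have FS: "S1 \<le> F" "S2 \<le> F" by auto
  obtain B1 where B1: "\<And>y. norm (f \<mu> y) \<le> B1" using D(2) unfolding bounded_iff by auto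
  obtain B2 where B2: "\<And>y. norm (D y) \<le> B2" using D(3) unfolding bounded_iff by auto
  have "norm (f \<mu> y) \<le> S1" unfolding S1_def
    by (rule cSUP_upper) (use B1 in \<open>auto intro!: bdd_aboveI\<close>)
  then show "norm (f \<mu> y) \<le> F" using FS by simp
  have on: "onorm (blinfun_apply (D y)) \<le> S2" for y
  proof -
    have "onorm (blinfun_apply (D y)) = onorm (frechet_derivative (f \<mu>) (at y))" using fd by simp
    also have "\<dots> \<le> S2" unfolding S2_def
      by (rule cSUP_upper) (use B2 in \<open>auto intro!: bdd_aboveI simp: fd norm_blinfun.rep_eq[symmetric]\<close>)
    finally show ?thesis .
  qed
  have "norm (f \<mu> a - f \<mu> b) \<le> S2 * norm (a - b)"
    by (rule differentiable_bound[of UNIV "f \<mu>" "\<lambda>y. blinfun_apply (D y)"])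
       (use D(1) on in auto)
  also have "\<dots> \<le> F * norm (a - b)" using FS by (intro mult_right_mono) auto
  finally show "norm (f \<mu> a - f \<mu> b) \<le> F * norm (a - b)" .
qed

lemma F_nn: "F \<ge> 0"
proof -
  have "1 \<in> {1..d}" using d1 by simp
  from F_bounds(1)[OF this, of undefined] show ?thesis using norm_ge_zero order_trans by blast
qed

lemma Xi_bound: "norm (Xi a b) \<le> F * l1_dist d (w a) (w b)"
proof -
  have "norm (Xi a b) \<le> (\<Sum>\<mu>=1..d. norm ((w b \<mu> - w a \<mu>) *\<^sub>R f \<mu> (x a)))"
    unfolding Xi_def by (rule norm_sum)
  also have "\<dots> \<le> (\<Sum>\<mu>=1..d. F * \<bar>w b \<mu> - w a \<mu>\<bar>)"
  proof (intro sum_mono)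
    fix \<mu> assume m: "\<mu> \<in> {1..d}"
    have "norm ((w b \<mu> - w a \<mu>) *\<^sub>R f \<mu> (x a)) = \<bar>w b \<mu> - w a \<mu>\<bar> * norm (f \<mu> (x a))" by simp
    also have "\<dots> \<le> \<bar>w b \<mu> - w a \<mu>\<bar> * F" using F_bounds(1)[OF m, of "x a"] by (intro mult_left_mono) auto
    finally show "norm ((w b \<mu> - w a \<mu>) *\<^sub>R f \<mu> (x a)) \<le> F * \<bar>w b \<mu> - w a \<mu>\<bar>" by (simp add: mult.commute)
  qed
  finally show ?thesis unfolding l1_dist_def by (simp add: sum_distrib_left)
qed

lemma Xi_delta: "norm (Xi a b + Xi b c - Xi a c) \<le> F * norm (x b - x a) * l1_dist d (w b) (w c)"
proof -
  have "Xi a b + Xi b c - Xi a c = (\<Sum>\<mu>=1..d. (w c \<mu> - w b \<mu>) *\<^sub>R (f \<mu> (x b) - f \<mu> (x a)))"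
    unfolding Xi_def by (simp add: sum.distrib[symmetric] sum_subtractf[symmetric] algebra_simps)
  also have "norm \<dots> \<le> (\<Sum>\<mu>=1..d. \<bar>w c \<mu> - w b \<mu>\<bar> * norm (f \<mu> (x b) - f \<mu> (x a)))"
    by (rule order_trans[OF norm_sum]) simp
  also have "\<dots> \<le> (\<Sum>\<mu>=1..d. \<bar>w c \<mu> - w b \<mu>\<bar> * (F * norm (x b - x a)))"
    using F_bounds(2) by (intro sum_mono mult_left_mono) auto
  finally show ?thesis unfolding l1_dist_def by (simp add: sum_distrib_left sum_distrib_right mult_ac)
qed

lemma step_Xi: "k < N \<Longrightarrow> x (Suc k) - x k = Xi k (Suc k)"
  using rec unfolding Xi_def by simp

lemma telescope: "t \<le> N \<Longrightarrow> s \<le> t \<Longrightarrow> (\<Sum>j<t - s. Xi (s + j) (s + Suc j)) = x t - x s"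
proof (induction t)
  case 0 then show ?case by simp
next
  case (Suc t)
  show ?case
  proof (cases "s = Suc t")
    case True then show ?thesis by simp
  next
    case False
    then have st: "s \<le> t" using Suc.prems by simp
    then have e: "Suc t - s = Suc (t - s)" by simp
    have "(\<Sum>j<Suc t - s. Xi (s + j) (s + Suc j)) = (\<Sum>j<t - s. Xi (s + j) (s + Suc j)) + Xi t (Suc t)"
      unfolding e using st by simp
    also have "\<dots> = x t - x s + (x (Suc t) - x t)" using Suc.IH[OF _ st] Suc.prems step_Xi[of t] by simp
    finally show ?thesis by simp
  qed
qed

definition "Isum \<sigma> m = (\<Sum>i<m. Xi (\<sigma> i) (\<sigma> (Suc i)))"

lemma X_nn: "X s t \<ge> 0" unfolding X_def by simp
lemma W_nn: "W s t \<ge> 0" unfolding W_def by simp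

lemma pow_half_sq: "(y::real) \<ge> 0 \<Longrightarrow> (y powr (p/2))^2 = y powr p"
  by (simp add: power2_eq_square powr_add[symmetric])

lemma sew_part:
  assumes "isPart \<sigma> m s t" "m \<ge> 1"
  shows "norm (Isum \<sigma> m - Xi s t) \<le> F * X s t * W s t * (\<Sum>j=1..m-1. real j powr (-(2/p)))"
  using assms
proof (induction m arbitrary: \<sigma>)
  case 0 then show ?case by simp
next
  case (Suc m)
  show ?case
  proof (cases "m = 0")
    case True
    then show ?thesis using Suc.prems unfolding Isum_def isPart_def by simp
  next
    case False
    then have m1: "m \<ge> 1" by simp
    note pt = Suc.prems(1)
    define a where "a i = norm (x (\<sigma> (Suc i)) - x (\<sigma> i))" for i
    define b where "b i = l1_dist d (w (\<sigma> (Suc i))) (w (\<sigma> (Suc (Suc i))))" for i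
    define c where "c i = a i * b i" for i
    define V1 where "V1 = Vm gx s t"
    define V2 where "V2 = Vm gw s t"
    have an: "a i \<ge> 0" "b i \<ge> 0" "c i \<ge> 0" for i unfolding a_def b_def c_def using l1_nn by auto
    have V1n: "V1 \<ge> 0" "V2 \<ge> 0" unfolding V1_def V2_def
      using Vm_nonneg gx_nn gw_nn part_range[OF pt, of "Suc m"] pt unfolding isPart_def by auto
    have sa: "(\<Sum>i<m. a i powr p) \<le> V1"
    proof -
      have "(\<Sum>i<m. a i powr p) = psum gx \<sigma> m" unfolding psum_def a_def gx_def by simp
      also have "\<dots> \<le> psum gx \<sigma> (Suc m)" unfolding psum_def using gx_nn by simp
      also have "\<dots> \<le> V1" unfolding V1_def by (rule part_psum_le[OF pt])
      finally show ?thesis .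
    qed
    have sb: "(\<Sum>i<m. b i powr p) \<le> V2"
    proof -
      have "psum gw \<sigma> (Suc m) = gw (\<sigma> 0) (\<sigma> 1) + (\<Sum>i<m. b i powr p)"
        unfolding psum_def b_def gw_def by (subst sum.lessThan_Suc_shift) simp
      then have "(\<Sum>i<m. b i powr p) \<le> psum gw \<sigma> (Suc m)" using gw_nn[of "\<sigma> 0" "\<sigma> 1"] by simp
      also have "\<dots> \<le> V2" unfolding V2_def by (rule part_psum_le[OF pt])
      finally show ?thesis .
    qed
    have cs: "(\<Sum>i<m. c i powr (p/2))^2 \<le> V1 * V2"
    proof -
      have "(\<Sum>i<m. c i powr (p/2)) = (\<Sum>i<m. a i powr (p/2) * b i powr (p/2))"
        unfolding c_def using an by (simp add: powr_mult)
      then have "(\<Sum>i<m. c i powr (p/2))^2 \<le> (\<Sum>i<m. (a i powr (p/2))^2) * (\<Sum>i<m. (b i powr (p/2))^2)"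
        using Cauchy_Schwarz_ineq_sum by metis
      also have "\<dots> = (\<Sum>i<m. a i powr p) * (\<Sum>i<m. b i powr p)"
        using an by (simp add: pow_half_sq)
      also have "\<dots> \<le> V1 * V2" using sa sb V1n by (intro mult_mono) (auto intro: sum_nonneg)
      finally show ?thesis .
    qed
    have csum_nn: "(\<Sum>i<m. c i powr (p/2)) \<ge> 0" by (intro sum_nonneg) simp
    have cs2: "(\<Sum>i<m. c i powr (p/2)) \<le> sqrt (V1 * V2)"
      using cs csum_nn real_le_rsqrt by blast
    obtain i0 where i0: "i0 < m" "real m * c i0 powr (p/2) \<le> (\<Sum>i<m. c i powr (p/2))"
    proof -
      have "0 \<in> {..<m}" using m1 by simp
      then have "{..<m} \<noteq> {}" by blast
      from exists_le_avg[of "{..<m}" "\<lambda>i. c i powr (p/2)", OF _ this]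
      have "\<exists>i\<in>{..<m}. real m * c i powr (p/2) \<le> (\<Sum>i<m. c i powr (p/2))" by simp
      then show ?thesis using that by blast
    qed
    have ci0: "c i0 \<le> X s t * W s t * real m powr (-(2/p))"
    proof -
      have mpos: "real m > 0" using m1 by simp
      have "c i0 powr (p/2) \<le> sqrt (V1 * V2) / real m"
        using i0(2) cs2 mpos by (simp add: field_simps)
      then have "(c i0 powr (p/2)) powr (2/p) \<le> (sqrt (V1 * V2) / real m) powr (2/p)"
        using p0 by (intro powr_mono2) auto
      also have "(c i0 powr (p/2)) powr (2/p) = c i0" using p0 an by (simp add: powr_powr)
      also have "(sqrt (V1 * V2) / real m) powr (2/p) = sqrt (V1 * V2) powr (2/p) / real m powr (2/p)"
        by (rule powr_divide)
      also have "sqrt (V1 * V2) powr (2/p) = (V1 * V2) powr (1/p)"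
        using V1n p0 by (simp add: powr_half_sqrt[symmetric] powr_powr)
      also have "\<dots> = X s t * W s t" unfolding X_def W_def V1_def[symmetric] V2_def[symmetric]
        using V1n by (simp add: powr_mult)
      finally show ?thesis using mpos by (simp add: powr_minus divide_inverse)
    qed
    define \<sigma>' where "\<sigma>' = (\<lambda>j. if j < Suc i0 then \<sigma> j else \<sigma> (Suc j))"
    have pt': "isPart \<sigma>' m s t" unfolding isPart_def
    proof (intro conjI allI impI)
      show "\<sigma>' 0 = s" using pt unfolding \<sigma>'_def isPart_def by simp
      show "\<sigma>' m = t" using pt i0 unfolding \<sigma>'_def isPart_def by simp
      fix j assume j: "j < m"
      consider "j < i0" | "j = i0" | "j > i0" by linarith
      then show "\<sigma>' j < \<sigma>' (Suc j)"
      proof cases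
        case 1 then show ?thesis using pt j unfolding \<sigma>'_def isPart_def by simp
      next
        case 2 then show ?thesis using part_less[OF pt, of j "Suc (Suc j)"] j unfolding \<sigma>'_def by simp
      next
        case 3 then show ?thesis using pt j unfolding \<sigma>'_def isPart_def by simp
      qed
    qed
    have IH: "norm (Isum \<sigma>' m - Xi s t) \<le> F * X s t * W s t * (\<Sum>j=1..m-1. real j powr (-(2/p)))"
      using Suc.IH[OF pt' m1] .
    define Dl where "Dl = Xi (\<sigma> i0) (\<sigma> (Suc i0)) + Xi (\<sigma> (Suc i0)) (\<sigma> (Suc (Suc i0))) - Xi (\<sigma> i0) (\<sigma> (Suc (Suc i0)))"
    have split: "Isum \<sigma> (Suc m) = Isum \<sigma>' m + Dl"
      unfolding Isum_def Dl_def \<sigma>'_def by (rule remove_sum[OF i0(1)])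
    have Dlb: "norm Dl \<le> F * c i0"
      unfolding Dl_def c_def a_def b_def using Xi_delta by (simp add: mult.assoc)
    have "norm (Isum \<sigma> (Suc m) - Xi s t) \<le> norm (Isum \<sigma>' m - Xi s t) + norm Dl"
      unfolding split by (rule order_trans[OF _ norm_triangle_ineq]) (simp add: algebra_simps)
    also have "\<dots> \<le> F * X s t * W s t * (\<Sum>j=1..m-1. real j powr (-(2/p))) + F * (X s t * W s t * real m powr (-(2/p)))"
      using IH Dlb ci0 F_nn by (meson add_mono mult_left_mono order_trans)
    also have "\<dots> = F * X s t * W s t * (\<Sum>j=1..Suc m-1. real j powr (-(2/p)))"
    proof -
      have "{1..m} = insert m {1..m-1}" using m1 by auto
      then have "(\<Sum>j=1..m. real j powr (-(2/p))) = real m powr (-(2/p)) + (\<Sum>j=1..m-1. real j powr (-(2/p)))"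
        using m1 by simp
      then show ?thesis by (simp add: algebra_simps)
    qed
    finally show ?thesis .
  qed
qed

lemma zeta_nn: "zetaN N q \<ge> 0" unfolding zetaN_def by (intro sum_nonneg) simp

lemma sewing:
  assumes "s < t" "t \<le> N"
  shows "norm (x t - x s - Xi s t) \<le> F * X s t * W s t * zetaN N (2/p)"
proof -
  have pt: "isPart (\<lambda>i. s + i) (t - s) s t" unfolding isPart_def using assms by simp
  have "Isum (\<lambda>i. s + i) (t - s) = x t - x s"
    unfolding Isum_def using telescope[of t s] assms by simp
  then have "norm (x t - x s - Xi s t) \<le> F * X s t * W s t * (\<Sum>j=1..t-s-1. real j powr (-(2/p)))"
    using sew_part[OF pt] assms by simp
  also have "\<dots> \<le> F * X s t * W s t * zetaN N (2/p)"
    unfolding zetaN_def using F_nn X_nn W_nn assms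
    by (intro mult_left_mono sum_mono2) auto
  finally show ?thesis .
qed

definition "C = CpN p N"

lemma C_nn: "C \<ge> 0" unfolding C_def CpN_def using zeta_nn by simp

lemma zeta_le_C: "zetaN N (2/p) \<le> C"
proof -
  have "1 \<le> 2 powr (2/p)" using p0 by (intro ge_one_powr_ge_zero) auto
  then show ?thesis unfolding C_def CpN_def using zeta_nn[of "2/p"]
    by (metis mult_le_cancel_right1 mult.commute order_trans[OF _ mult_right_mono] mult_1 order_refl)
qed

lemma Vm_gx: "s \<le> t \<Longrightarrow> Vm gx s t = X s t powr p"
  unfolding X_def using Vm_nonneg[of gx s t] gx_nn p0 by (simp add: pp_inv)

lemma Vm_gw: "s \<le> t \<Longrightarrow> Vm gw s t = W s t powr p"
  unfolding W_def using Vm_nonneg[of gw s t] gw_nn p0 by (simp add: pp_inv)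

lemma X_refl: "X s s = 0" unfolding X_def using Vm_refl p0 by simp
lemma W_refl: "W s s = 0" unfolding W_def using Vm_refl p0 by simp

lemma l1_le_W: assumes "a < b" shows "l1_dist d (w a) (w b) \<le> W a b"
proof -
  have "gw a b \<le> Vm gw a b" using Vm_ge_single[OF assms] .
  then have "(gw a b) powr (1/p) \<le> W a b" unfolding W_def using gw_nn p0 by (intro powr_mono2) auto
  then show ?thesis unfolding gw_def using l1_nn p0 by (simp add: pp_inv2)
qed

lemma X_mono: "s \<le> a \<Longrightarrow> a \<le> b \<Longrightarrow> b \<le> t \<Longrightarrow> X a b \<le> X s t"
  unfolding X_def using Vm_mono[of gx s a b t] gx_nn Vm_nonneg[of gx a b] p0 by (intro powr_mono2) auto

lemma W_mono: "s \<le> a \<Longrightarrow> a \<le> b \<Longrightarrow> b \<le> t \<Longrightarrow> W a b \<le> W s t"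
  unfolding W_def using Vm_mono[of gw s a b t] gw_nn Vm_nonneg[of gw a b] p0 by (intro powr_mono2) auto

lemma X_single: "u < N \<Longrightarrow> X u (Suc u) \<le> F * W u (Suc u)"
proof -
  assume u: "u < N"
  have "X u (Suc u) = norm (x (Suc u) - x u)"
    unfolding X_def Vm_single gx_def using p0 by (simp add: pp_inv2)
  also have "\<dots> = norm (Xi u (Suc u))" using step_Xi[OF u] by simp
  also have "\<dots> \<le> F * l1_dist d (w u) (w (Suc u))" by (rule Xi_bound)
  also have "\<dots> \<le> F * W u (Suc u)" using l1_le_W[of u "Suc u"] F_nn by (intro mult_left_mono) auto
  finally show ?thesis .
qed

lemma X_triangle: "s \<le> u \<Longrightarrow> u \<le> t \<Longrightarrow> X s t \<le> X s u + X u t"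
  unfolding X_def gx_def
  by (rule X_tri[of "\<lambda>a b. norm (x b - x a)"]) (use p1 in \<open>auto simp: norm_minus_commute intro: order_trans[OF _ norm_triangle_ineq]\<close>)

lemma bootstrap:
  assumes st: "s \<le> t" "t \<le> N" and small: "2 * C * F * W s t \<le> 1"
  shows "X s t \<le> 2 * F * W s t"
proof (cases "s = t")
  case True then show ?thesis using X_refl W_refl by simp
next
  case False
  then have st': "s < t" using st by simp
  define X0 where "X0 = X s t"
  define W0 where "W0 = W s t"
  define K where "K = F + F * C * X0"
  have K0: "K \<ge> 0" unfolding K_def X0_def using F_nn C_nn X_nn by simp
  have pw: "norm (x b - x a) \<le> K * W a b" if ab: "s \<le> a" "a < b" "b \<le> t" for a b
  proof -
    have "norm (x b - x a) \<le> norm (Xi a b) + norm (x b - x a - Xi a b)"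
      by (rule order_trans[OF _ norm_triangle_ineq]) simp
    also have "\<dots> \<le> F * l1_dist d (w a) (w b) + F * X a b * W a b * zetaN N (2/p)"
      using Xi_bound sewing[of a b] ab st by (intro add_mono) auto
    also have "\<dots> \<le> F * W a b + F * X0 * W a b * C"
    proof (intro add_mono)
      show "F * l1_dist d (w a) (w b) \<le> F * W a b" using l1_le_W[OF ab(2)] F_nn by (intro mult_left_mono)
      have "X a b \<le> X0" unfolding X0_def using X_mono ab by simp
      then show "F * X a b * W a b * zetaN N (2/p) \<le> F * X0 * W a b * C"
        using F_nn W_nn X_nn zeta_nn zeta_le_C X_nn[of s t] unfolding X0_def by (intro mult_mono) auto
    qed
    also have "\<dots> = K * W a b" unfolding K_def by (simp add: algebra_simps)
    finally show ?thesis .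
  qed
  obtain \<sigma> m where pt: "isPart \<sigma> m s t" and V: "Vm gx s t = psum gx \<sigma> m"
    using Vm_attained[OF st(1)] by blast
  have "psum gx \<sigma> m \<le> (\<Sum>j<m. K powr p * Vm gw (\<sigma> j) (\<sigma> (Suc j)))"
    unfolding psum_def
  proof (intro sum_mono)
    fix j assume j: "j \<in> {..<m}"
    have r: "s \<le> \<sigma> j" "\<sigma> j < \<sigma> (Suc j)" "\<sigma> (Suc j) \<le> t"
      using part_range[OF pt, of j] part_range[OF pt, of "Suc j"] pt j unfolding isPart_def by auto
    have "gx (\<sigma> j) (\<sigma> (Suc j)) \<le> (K * W (\<sigma> j) (\<sigma> (Suc j))) powr p"
      unfolding gx_def using pw[OF r] p0 by (intro powr_mono2) auto
    also have "\<dots> = K powr p * Vm gw (\<sigma> j) (\<sigma> (Suc j))"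
      using K0 W_nn Vm_gw[of "\<sigma> j" "\<sigma> (Suc j)"] r by (simp add: powr_mult)
    finally show "gx (\<sigma> j) (\<sigma> (Suc j)) \<le> K powr p * Vm gw (\<sigma> j) (\<sigma> (Suc j))" .
  qed
  also have "\<dots> = K powr p * (\<Sum>j<m. Vm gw (\<sigma> j) (\<sigma> (Suc j)))" by (simp add: sum_distrib_left)
  also have "\<dots> \<le> K powr p * Vm gw s t" by (intro mult_left_mono Vm_superadd_multi[OF pt]) simp
  also have "\<dots> = (K * W0) powr p" unfolding W0_def using Vm_gw[OF st(1)] K0 W_nn by (simp add: powr_mult)
  finally have "X0 powr p \<le> (K * W0) powr p" unfolding X0_def using V Vm_gx[OF st(1)] by simp
  then have "(X0 powr p) powr (1/p) \<le> ((K * W0) powr p) powr (1/p)"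
    using p0 by (rule_tac powr_mono2) auto
  then have "X0 \<le> K * W0"
    using p0 X_nn[of s t] K0 W_nn[of s t] unfolding X0_def W0_def by (simp add: pp_inv2)
  also have "\<dots> = F * W0 + (C * F * W0) * X0" unfolding K_def by (simp add: algebra_simps)
  also have "\<dots> \<le> F * W0 + X0 / 2"
  proof -
    have "(C * F * W0) * X0 \<le> (1/2) * X0" using small X_nn unfolding W0_def X0_def
      by (intro mult_right_mono) auto
    then show ?thesis by simp
  qed
  finally show ?thesis unfolding X0_def W0_def by simp
qed

lemma num1: "(r::real) > 1 \<Longrightarrow> 2 + r \<le> 4 * r powr p"
proof -
  assume r: "r > 1"
  have "r powr 1 \<le> r powr p" using r p1 by (intro powr_mono) auto
  then have "r \<le> r powr p" using r by simp
  then show ?thesis using r by simp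
qed

lemma num2:
  assumes r: "(r::real) > 1" and q: "0 \<le> q" "q \<le> 1"
  shows "2 + r + 2 * q \<le> 4 * r powr p + 4 * q powr p"
proof -
  have "r powr 1 \<le> r powr p" using r p1 by (intro powr_mono) auto
  then have rr: "r \<le> r powr p" using r by simp
  have qq: "q^2 \<le> q powr p"
  proof (cases "q = 0")
    case True then show ?thesis by simp
  next
    case False
    then have qp: "q > 0" using q by simp
    have "q powr 2 = q powr p * q powr (2 - p)" by (simp add: powr_add[symmetric])
    also have "\<dots> \<le> q powr p * 1" using q p2 by (intro mult_left_mono powr_le1) auto
    finally have "q powr 2 \<le> q powr p" by simp
    moreover have "q powr 2 = q^2" using qp by (simp add: powr_realpow)
    ultimately show ?thesis by simp
  qed
  have "0 \<le> (2 * q - 1/2)^2" by simp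
  then have "2 * q \<le> 1 + 4 * q^2" by (simp add: power2_eq_square algebra_simps)
  then show ?thesis using rr qq r by simp
qed

definition "c0 = 2 * (2 powr p * C powr (p - 1) * F powr p)"

lemma c0_rel:
  assumes Cp: "C > 0" and ab: "a \<le> b"
  shows "c0 * Vm gw a b = 2 * (2 * C * F * W a b) powr p / C"
proof -
  have "(2 * C * F * W a b) powr p = 2 powr p * C powr p * F powr p * W a b powr p"
    using Cp F_nn W_nn by (simp add: powr_mult)
  moreover have "C powr p = C powr (p - 1) * C"
    using Cp by (simp add: powr_diff)
  ultimately show ?thesis unfolding c0_def Vm_gw[OF ab] using Cp by (simp add: field_simps)
qed

lemma main_large:
  "s < t \<Longrightarrow> t \<le> N \<Longrightarrow> 2 * C * F * W s t > 1 \<Longrightarrow> X s t \<le> c0 * Vm gw s t"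
proof (induction "t - s" arbitrary: s rule: less_induct)
  case less
  note st = less.prems(1) and tN = less.prems(2) and big = less.prems(3)
  have "C \<noteq> 0" using big by auto
  then have Cp: "C > 0" using C_nn by simp
  define U where "U = {u. s \<le> u \<and> u \<le> t \<and> 2 * C * F * W s u \<le> 1}"
  define u where "u = Max U"
  have finU: "finite U" unfolding U_def by (rule finite_subset[of _ "{s..t}"]) auto
  have sU: "s \<in> U" unfolding U_def using st W_refl by simp
  have uU: "u \<in> U" unfolding u_def using Max_in[OF finU] sU by blast
  then have su: "s \<le> u" "u \<le> t" and usmall: "2 * C * F * W s u \<le> 1" unfolding U_def by auto
  have "u \<noteq> t" using usmall big by auto
  then have ut: "u < t" using su by simp
  have ubig: "2 * C * F * W s (Suc u) > 1"
  proof (rule ccontr)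
    assume "\<not> ?thesis"
    then have "Suc u \<in> U" unfolding U_def using su ut by simp
    then have "Suc u \<le> u" unfolding u_def using Max_ge[OF finU] by blast
    then show False by simp
  qed
  define r1 where "r1 = 2 * C * F * W s (Suc u)"
  have h1: "X s (Suc u) \<le> (2 + r1) / (2 * C)"
  proof -
    have "X s (Suc u) \<le> X s u + X u (Suc u)" using X_triangle[of s u "Suc u"] su by simp
    also have "X s u \<le> 2 * F * W s u" using bootstrap[of s u] su ut tN usmall by simp
    also have "2 * F * W s u \<le> 1 / C" using usmall Cp by (simp add: field_simps)
    also have "X u (Suc u) \<le> F * W u (Suc u)" using X_single[of u] ut tN by simp
    also have "F * W u (Suc u) \<le> F * W s (Suc u)" using W_mono[of s u "Suc u" "Suc u"] su F_nn
      by (intro mult_left_mono) auto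
    also have "F * W s (Suc u) = r1 / (2 * C)" unfolding r1_def using Cp by (simp add: field_simps)
    finally show ?thesis using Cp by (simp add: field_simps)
  qed
  have H1: "c0 * Vm gw s (Suc u) = 2 * r1 powr p / C" unfolding r1_def using c0_rel[OF Cp, of s "Suc u"] su by simp
  have r1g: "r1 > 1" using ubig unfolding r1_def .
  show ?case
  proof (cases "Suc u = t")
    case True
    have "X s t \<le> (2 + r1) / (2 * C)" using h1 True by simp
    also have "\<dots> \<le> 4 * r1 powr p / (2 * C)" using num1[OF r1g] Cp by (intro divide_right_mono) auto
    also have "\<dots> = c0 * Vm gw s t" using H1 True by simp
    finally show ?thesis .
  next
    case False
    then have ut2: "Suc u < t" using ut by simp
    have sup: "c0 * Vm gw s (Suc u) + c0 * Vm gw (Suc u) t \<le> c0 * Vm gw s t"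
    proof -
      have "c0 \<ge> 0" unfolding c0_def using Cp F_nn by simp
      then show ?thesis using Vm_superadd[of s "Suc u" t gw] su ut2
        by (simp add: distrib_left[symmetric] mult_left_mono)
    qed
    have tri: "X s t \<le> X s (Suc u) + X (Suc u) t" using X_triangle su ut2 by simp
    show ?thesis
    proof (cases "2 * C * F * W (Suc u) t \<le> 1")
      case True
      define r2 where "r2 = 2 * C * F * W (Suc u) t"
      have r2b: "0 \<le> r2" "r2 \<le> 1" unfolding r2_def using True Cp F_nn W_nn by auto
      have "X (Suc u) t \<le> 2 * F * W (Suc u) t" using bootstrap[of "Suc u" t] True ut2 tN by simp
      also have "\<dots> = 2 * r2 / (2 * C)" unfolding r2_def using Cp by (simp add: field_simps)
      finally have h2: "X (Suc u) t \<le> 2 * r2 / (2 * C)" .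
      have H2: "c0 * Vm gw (Suc u) t = 2 * r2 powr p / C" unfolding r2_def using c0_rel[OF Cp, of "Suc u" t] ut2 by simp
      have "X s t \<le> (2 + r1) / (2 * C) + 2 * r2 / (2 * C)" using tri h1 h2 by simp
      also have "\<dots> = (2 + r1 + 2 * r2) / (2 * C)" by (simp add: add_divide_distrib)
      also have "\<dots> \<le> (4 * r1 powr p + 4 * r2 powr p) / (2 * C)"
        using num2[OF r1g r2b] Cp by (intro divide_right_mono) auto
      also have "\<dots> = c0 * Vm gw s (Suc u) + c0 * Vm gw (Suc u) t" unfolding H1 H2 using Cp by (simp add: field_simps)
      also have "\<dots> \<le> c0 * Vm gw s t" by (rule sup)
      finally show ?thesis .
    next
      case False
      then have "2 * C * F * W (Suc u) t > 1" by simp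
      moreover have "t - Suc u < t - s" using su ut2 by simp
      ultimately have h2: "X (Suc u) t \<le> c0 * Vm gw (Suc u) t" using less.hyps[of "Suc u"] ut2 tN by simp
      have "X s t \<le> (2 + r1) / (2 * C) + c0 * Vm gw (Suc u) t" using tri h1 h2 by simp
      also have "(2 + r1) / (2 * C) \<le> 4 * r1 powr p / (2 * C)" using num1[OF r1g] Cp by (intro divide_right_mono) auto
      also have "4 * r1 powr p / (2 * C) = c0 * Vm gw s (Suc u)" using H1 by simp
      also have "c0 * Vm gw s (Suc u) + c0 * Vm gw (Suc u) t \<le> c0 * Vm gw s t" by (rule sup)
      finally show ?thesis by simp
    qed
  qed
qed

lemma final:
  assumes "s < t" "t \<le> N"
  shows "X s t \<le> 2 * max (2 powr p * C powr (p - 1) * F powr p * W s t powr p) (2 * F * W s t)"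
proof (cases "2 * C * F * W s t \<le> 1")
  case True
  then have "X s t \<le> 2 * F * W s t" using bootstrap[of s t] assms by simp
  also have "\<dots> \<le> 2 * (2 * F * W s t)" using F_nn W_nn[of s t] by simp
  also have "\<dots> \<le> 2 * max (2 powr p * C powr (p - 1) * F powr p * W s t powr p) (2 * F * W s t)" by simp
  finally show ?thesis .
next
  case False
  then have "X s t \<le> c0 * Vm gw s t" using main_large assms by simp
  also have "\<dots> = 2 * (2 powr p * C powr (p - 1) * F powr p * W s t powr p)"
    unfolding c0_def using Vm_gw[of s t] assms by simp
  also have "\<dots> \<le> 2 * max (2 powr p * C powr (p - 1) * F powr p * W s t powr p) (2 * F * W s t)" by simp
  finally show ?thesis .
qed

end

theorem theorem5p2:
  fixes p :: real and N d n :: nat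
    and f :: "nat \<Rightarrow> 'a::real_normed_vector \<Rightarrow> 'a"
    and w :: "nat \<Rightarrow> nat \<Rightarrow> real"
    and x :: "nat \<Rightarrow> 'a" and \<xi> :: 'a
  assumes "1 \<le> p" and "p < 2"
    and "d \<ge> 1" and "n \<ge> 1"
    and "\<exists>B. finite B \<and> span B = (UNIV :: 'a set)" and "dim (UNIV :: 'a set) = n"
    and "C1b_fields d f"
    and "x 0 = \<xi>"
    and "\<And>k. k < N \<Longrightarrow> x (Suc k) = x k + (\<Sum>\<mu>=1..d. (w (Suc k) \<mu> - w k \<mu>) *\<^sub>R f \<mu> (x k))"
    and "k < l" and "l \<le> N"
  shows "pvar p (\<lambda>a b. norm (x b - x a)) k l
     \<le> 2 * max (2 powr p * CpN p N powr (p - 1) * C1b_norm d f powr p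
                   * pvar p (\<lambda>a b. l1_dist d (w a) (w b)) k l powr p)
               (2 * C1b_norm d f * pvar p (\<lambda>a b. l1_dist d (w a) (w b)) k l)"
proof -
  interpret setting p N d f w x
    by unfold_locales (use assms in auto)
  have e1: "pvar p (\<lambda>a b. norm (x b - x a)) k l = X k l" unfolding X_def gx_def pvar_Vm ..
  have e2: "pvar p (\<lambda>a b. l1_dist d (w a) (w b)) k l = W k l" unfolding W_def gw_def pvar_Vm ..
  show ?thesis unfolding e1 e2 C_def[symmetric] F_def[symmetric]
    using final[of k l] assms by simp
qed

end
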